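(* For any integers $n,m\ge 1$, $$\sum_{\pi\in\mathfrak{S}_n}q^{{\rm altmaj}(\pi)}\in (1+q^m)^{\lfloor n/2m\rfloor}\mathbb{Z}[q].$$
   Context: $\mathfrak{S}_n$ is the set of permutations $\pi=\pi_1\cdots\pi_n$ of $\{1,\dots,n\}$; $\widehat{D}(\pi)=\{2i:\pi_{2i}<\pi_{2i+1}\}\cup\{2i+1:\pi_{2i+1}>\pi_{2i+2}\}$ (indices in $\{1,\dots,n-1\}$) and ${\rm altmaj}(\pi)=\sum_{i\in\widehat{D}(\pi)}i$. *)

theory Defs
  imports "HOL-Combinatorics.Permutations" "HOL-Computational_Algebra.Polynomial"
begin

text \<open>A permutation pi = pi_1 ... pi_n of {1,...,n} is represented by a function
  p with p permutes {1..n}, where pi_i = p i.\<close>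

definition alt_des :: "nat \<Rightarrow> (nat \<Rightarrow> nat) \<Rightarrow> nat set" where
  "alt_des n p = {i \<in> {1..<n}. (even i \<and> p i < p (Suc i)) \<or> (odd i \<and> p i > p (Suc i))}"

definition altmaj :: "nat \<Rightarrow> (nat \<Rightarrow> nat) \<Rightarrow> nat" where
  "altmaj n p = (\<Sum>i\<in>alt_des n p. i)"

definition altmaj_poly :: "nat \<Rightarrow> int poly" where
  "altmaj_poly n = (\<Sum>p\<in>{p. p permutes {1..n}}. monom 1 (altmaj n p))"

end

theory Submission imports Defs "HOL-Combinatorics.Multiset_Permutations" begin

definition qq :: "int poly" where "qq = [:0, 1:]"

definition ad :: "nat list \<Rightarrow> nat \<Rightarrow> bool" where
  "ad xs i \<longleftrightarrow> (even i \<and> xs!(i-1) < xs!i) \<or> (odd i \<and> xs!(i-1) > xs!i)"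

definition EE :: "nat \<Rightarrow> nat set \<Rightarrow> nat list \<Rightarrow> nat" where
  "EE s J xs = (\<Sum>i=1..<length xs. if i \<notin> J \<and> ad xs i then i + s else 0)"

definition SS :: "nat \<Rightarrow> nat set \<Rightarrow> nat set \<Rightarrow> nat set \<Rightarrow> nat set \<Rightarrow> int poly" where
  "SS s I U J V = (\<Sum>xs \<in> {xs \<in> permutations_of_set V. (\<forall>a\<in>I. ad xs a) \<and> (\<forall>a\<in>U. \<not> ad xs a)}. qq ^ EE s J xs)"

lemma dvd_pow_diff: "(x::'a::comm_ring_1) - y dvd x ^ n - y ^ n"
proof (induction n)
  case 0 then show ?case by simp
next
  case (Suc n)
  have "x ^ Suc n - y ^ Suc n = x * (x ^ n - y ^ n) + (x - y) * y ^ n"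
    by (simp add: algebra_simps)
  then show ?case using Suc by (simp add: dvd_add dvd_mult)
qed

lemma qq_m_pow:
  shows "(1 + qq ^ m) dvd qq ^ (m * k) - (-1) ^ k"
proof -
  have "qq ^ m - (-1) dvd (qq ^ m) ^ k - (-1) ^ k" by (rule dvd_pow_diff)
  then show ?thesis by (simp add: power_mult add.commute)
qed

lemma qq_cong:
  assumes "m \<ge> 1" "e mod (2*m) = e' mod (2*m)"
  shows "(1 + qq ^ m) dvd qq ^ e - qq ^ e'"
proof -
  have key: "(1 + qq ^ m) dvd qq ^ (a + 2*m*t) - qq ^ a" for a t
  proof -
    have "(1 + qq ^ m) dvd qq ^ (m * (2*t)) - (-1) ^ (2*t)" by (rule qq_m_pow)
    then have "(1 + qq ^ m) dvd qq ^ (2*m*t) - 1" by (simp add: mult.assoc mult.left_commute)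
    then have "(1 + qq ^ m) dvd qq ^ a * (qq ^ (2*m*t) - 1)" by (rule dvd_mult)
    then show ?thesis by (simp add: power_add algebra_simps)
  qed
  show ?thesis
  proof (cases "e \<le> e'")
    case True
    then obtain t where "e' = e + 2*m*t"
      using assms(2) by (metis le_add_diff_inverse mod_eq_dvd_iff_nat dvdE)
    then have "(1 + qq ^ m) dvd qq ^ e' - qq ^ e" using key by simp
    then show ?thesis by (metis dvd_minus_iff minus_diff_eq)
  next
    case False
    then obtain t where "e = e' + 2*m*t"
      using assms(2) by (metis le_add_diff_inverse nat_le_linear mod_eq_dvd_iff_nat dvdE)
    then show ?thesis using key by simp
  qed
qed

lemma content_f: "content (1 + qq ^ m :: int poly) = 1" if "m \<ge> 1"
proof -
  have "coeff (1 + qq ^ m) m = 1" using that by (simp add: qq_def coeff_1 flip: monom_altdef[of 1, simplified])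
  then have "content (1 + qq ^ m) dvd 1" by (metis content_dvd_coeff)
  then show ?thesis using normalize_content[of "1 + qq^m"] by simp
qed

lemma dvd_two_cancel:
  assumes "m \<ge> 1" "(1 + qq ^ m) dvd 2 * c"
  shows "(1 + qq ^ m) dvd c"
proof -
  let ?f = "1 + qq ^ m"
  obtain h where h: "2 * c = ?f * h" using assms(2) by blast
  have "(2::int poly) * c = smult 2 c" by (simp add: numeral_mult_conv_smult)
  then have A: "content (2 * c) = 2 * content c" by simp
  have "content (2 * c) = content ?f * content h" by (simp only: h content_mult)
  also have "\<dots> = content h" using content_f[OF assms(1)] by simp
  finally have "content h = 2 * content c" using A by simp
  then have hg: "h = smult 2 (smult (content c) (primitive_part h))"
    by (metis content_times_primitive_part smult_smult)
  define g where "g = smult (content c) (primitive_part h)"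
  have "2 * c = 2 * (?f * g)"
    by (metis h hg g_def mult_smult_right numeral_mult_conv_smult)
  then have "c = ?f * g" by (metis mult_left_cancel zero_neq_numeral)
  then show ?thesis by (rule dvdI)
qed

lemma perms_len: "xs \<in> permutations_of_set V \<Longrightarrow> length xs = card V"
  by (auto simp: permutations_of_set_def distinct_card)

lemma SS_part:
  "SS s I U J V = SS s (insert p I) U J V + SS s I (insert p U) J V"
proof -
  let ?P = "permutations_of_set V"
  have e: "{xs \<in> ?P. (\<forall>a\<in>I. ad xs a) \<and> (\<forall>a\<in>U. \<not> ad xs a)} =
    {xs \<in> ?P. (\<forall>a\<in>insert p I. ad xs a) \<and> (\<forall>a\<in>U. \<not> ad xs a)} \<union>
    {xs \<in> ?P. (\<forall>a\<in>I. ad xs a) \<and> (\<forall>a\<in>insert p U. \<not> ad xs a)}" by auto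
  show ?thesis unfolding SS_def e
    by (rule sum.union_disjoint) auto
qed

lemma EE_insert:
  assumes "1 \<le> p" "p < length xs" "p \<notin> J"
  shows "EE s J xs = EE s (insert p J) xs + (if ad xs p then p + s else 0)"
proof -
  let ?f = "\<lambda>i. if i \<notin> J \<and> ad xs i then i + s else 0"
  let ?g = "\<lambda>i. if i \<notin> insert p J \<and> ad xs i then i + s else 0"
  have pin: "p \<in> {1..<length xs}" using assms by simp
  have "EE s J xs = ?f p + sum ?f ({1..<length xs} - {p})"
    unfolding EE_def using pin by (simp add: sum.remove)
  also have "sum ?f ({1..<length xs} - {p}) = sum ?g ({1..<length xs} - {p})"
    by (rule sum.cong) auto
  also have "\<dots> = sum ?g {1..<length xs}"
    using pin by (simp add: sum.remove)
  finally show ?thesis unfolding EE_def using assms by simp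
qed

lemma SS_expand:
  assumes "finite V" "1 \<le> p" "p < card V" "p \<notin> J"
  shows "SS s I U J V = SS s I U (insert p J) V + (qq ^ (p + s) - 1) * SS s (insert p I) U (insert p J) V"
proof -
  let ?T = "{xs \<in> permutations_of_set V. (\<forall>a\<in>I. ad xs a) \<and> (\<forall>a\<in>U. \<not> ad xs a)}"
  have fin: "finite ?T" by simp
  have "SS s I U J V = (\<Sum>xs\<in>?T. qq ^ EE s (insert p J) xs + (if ad xs p then (qq ^ (p+s) - 1) * qq ^ EE s (insert p J) xs else 0))"
    unfolding SS_def
  proof (rule sum.cong[OF refl])
    fix xs assume "xs \<in> ?T"
    then have "length xs = card V" using perms_len by blast
    then have "EE s J xs = EE s (insert p J) xs + (if ad xs p then p + s else 0)"
      using EE_insert assms by simp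
    then show "qq ^ EE s J xs = qq ^ EE s (insert p J) xs + (if ad xs p then (qq ^ (p+s) - 1) * qq ^ EE s (insert p J) xs else 0)"
      by (simp add: power_add algebra_simps)
  qed
  also have "\<dots> = SS s I U (insert p J) V + (\<Sum>xs\<in>?T. if ad xs p then (qq ^ (p+s) - 1) * qq ^ EE s (insert p J) xs else 0)"
    unfolding SS_def by (simp add: sum.distrib)
  also have "(\<Sum>xs\<in>?T. if ad xs p then (qq ^ (p+s) - 1) * qq ^ EE s (insert p J) xs else 0)
      = (\<Sum>xs\<in>{xs\<in>?T. ad xs p}. (qq ^ (p+s) - 1) * qq ^ EE s (insert p J) xs)"
    by (rule sum.inter_filter[OF fin, symmetric])
  also have "{xs\<in>?T. ad xs p} = {xs \<in> permutations_of_set V. (\<forall>a\<in>insert p I. ad xs a) \<and> (\<forall>a\<in>U. \<not> ad xs a)}"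
    by auto
  finally show ?thesis unfolding SS_def by (simp add: sum_distrib_left)
qed

definition sh :: "nat \<Rightarrow> nat set \<Rightarrow> nat set" where
  "sh p X = (\<lambda>a. a - p) ` (X \<inter> {p<..})"

lemma in_sh: "1 \<le> i \<Longrightarrow> i \<in> sh p X \<longleftrightarrow> i + p \<in> X"
  unfolding sh_def
proof
  assume "i \<in> (\<lambda>a. a - p) ` (X \<inter> {p<..})" "1 \<le> i"
  then obtain a where "a \<in> X" "a > p" "i = a - p" by auto
  then show "i + p \<in> X" by simp
next
  assume "i + p \<in> X" "1 \<le> i"
  then show "i \<in> (\<lambda>a. a - p) ` (X \<inter> {p<..})"
    by (intro image_eqI[of _ _ "i + p"]) auto
qed

lemma ad_app_left:
  assumes "1 \<le> i" "i < length ys"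
  shows "ad (ys @ zs) i = ad ys i"
proof -
  have "i - 1 < length ys" using assms by simp
  then have a: "(ys @ zs) ! (i - 1) = ys ! (i - 1)"
    by (rule nth_append_left)
  have b: "(ys @ zs) ! i = ys ! i"
    using assms by (simp add: nth_append)
  show ?thesis unfolding ad_def a b ..
qed

lemma ad_app_right:
  assumes "1 \<le> i" "i < length zs" "even (length ys)"
  shows "ad (ys @ zs) (i + length ys) = ad zs i"
proof -
  have "i + length ys - 1 = length ys + (i - 1)" using assms by simp
  then have a: "(ys @ zs) ! (i + length ys - 1) = zs ! (i - 1)"
    by (simp only: nth_append_length_plus)
  have b: "(ys @ zs) ! (i + length ys) = zs ! i"
    by (simp add: nth_append)
  have c: "even (i + length ys) = even i" using assms by simp
  show ?thesis unfolding ad_def a b c ..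
qed


lemma EE_append:
  assumes "length ys = p" "1 \<le> p" "even p" "p \<in> J"
  shows "EE s J (ys @ zs) = EE s (J \<inter> {..<p}) ys + EE (s + p) (sh p J) zs"
proof -
  let ?q = "length zs"
  define f where "f = (\<lambda>i. if i \<notin> J \<and> ad (ys @ zs) i then i + s else 0)"
  have "EE s J (ys @ zs) = sum f {1..<p + ?q}" unfolding EE_def f_def using assms by simp
  also have "\<dots> = sum f {1..<p} + sum f {p..<p + ?q}"
    using assms by (simp add: sum.atLeastLessThan_concat)
  also have "sum f {1..<p} = EE s (J \<inter> {..<p}) ys"
    unfolding EE_def f_def using assms by (intro sum.cong) (auto simp: ad_app_left)
  also have "sum f {p..<p + ?q} = sum (\<lambda>i. f (i + p)) {0..<?q}"
    using sum.shift_bounds_nat_ivl[of f 0 p ?q] by (simp add: add.commute)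
  also have "\<dots> = sum (\<lambda>i. f (i + p)) {1..<?q}"
  proof (cases "?q = 0")
    case True then show ?thesis by simp
  next
    case False
    then have "sum (\<lambda>i. f (i + p)) {0..<?q} = f (0 + p) + sum (\<lambda>i. f (i + p)) {Suc 0..<?q}"
      by (intro sum.atLeast_Suc_lessThan) simp
    then show ?thesis using assms by (simp add: f_def)
  qed
  also have "\<dots> = EE (s + p) (sh p J) zs"
    unfolding EE_def f_def
  proof (intro sum.cong refl)
    fix i assume "i \<in> {1..<?q}"
    then have i: "1 \<le> i" "i < ?q" by auto
    have "ad (ys @ zs) (i + length ys) = ad zs i" using ad_app_right[where ys=ys, OF i] assms by simp
    then have "ad (ys @ zs) (i + p) = ad zs i" using assms by simp
    then show "(if i + p \<notin> J \<and> ad (ys @ zs) (i + p) then i + p + s else 0) =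
               (if i \<notin> sh p J \<and> ad zs i then i + (s + p) else 0)"
      using in_sh[OF i(1)] by simp
  qed
  finally show ?thesis .
qed

definition cnd :: "nat set \<Rightarrow> nat set \<Rightarrow> nat list \<Rightarrow> bool" where
  "cnd I U xs \<longleftrightarrow> (\<forall>a\<in>I. ad xs a) \<and> (\<forall>a\<in>U. \<not> ad xs a)"

lemma SS_cnd: "SS s I U J V = (\<Sum>xs \<in> {xs \<in> permutations_of_set V. cnd I U xs}. qq ^ EE s J xs)"
  unfolding SS_def cnd_def ..

lemma cnd_append:
  assumes "length ys = p" "1 \<le> p" "even p" "p \<notin> I" "p \<notin> U" "I \<union> U \<subseteq> {1..<p + length zs}"
  shows "cnd I U (ys @ zs) \<longleftrightarrow> cnd (I \<inter> {..<p}) (U \<inter> {..<p}) ys \<and> cnd (sh p I) (sh p U) zs"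
proof -
  have L: "ad (ys @ zs) a = ad ys a" if "a \<in> I \<union> U" "a < p" for a
    using that assms by (intro ad_app_left) auto
  have R: "ad (ys @ zs) a = ad zs (a - p)" if "a \<in> I \<union> U" "a > p" for a
  proof -
    have "ad (ys @ zs) ((a - p) + length ys) = ad zs (a - p)"
      using that assms by (intro ad_app_right) auto
    then show ?thesis using that assms by simp
  qed
  have R2: "ad zs b = ad (ys @ zs) (b + p)" if "b \<ge> 1" "b + p \<in> I \<union> U" for b
    using R[of "b + p"] that by simp
  have split: "a < p \<or> a > p" if "a \<in> I \<union> U" for a
  proof -
    have "a \<noteq> p" using that assms by auto
    then show ?thesis by arith
  qed
  show ?thesis
    unfolding cnd_def
  proof (intro iffI conjI ballI)
    fix a assume H: "(\<forall>a\<in>I. ad (ys @ zs) a) \<and> (\<forall>a\<in>U. \<not> ad (ys @ zs) a)"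
    { fix a assume "a \<in> I \<inter> {..<p}" then show "ad ys a" using H L by auto }
    { fix a assume "a \<in> U \<inter> {..<p}" then show "\<not> ad ys a" using H L by auto }
    { fix b assume b: "b \<in> sh p I"
      then obtain a where "a \<in> I" "a > p" "b = a - p" unfolding sh_def by auto
      then show "ad zs b" using H R by auto }
    { fix b assume b: "b \<in> sh p U"
      then obtain a where "a \<in> U" "a > p" "b = a - p" unfolding sh_def by auto
      then show "\<not> ad zs b" using H R by auto }
  next
    fix a
    assume H: "((\<forall>a\<in>I \<inter> {..<p}. ad ys a) \<and> (\<forall>a\<in>U \<inter> {..<p}. \<not> ad ys a)) \<and>
               (\<forall>a\<in>sh p I. ad zs a) \<and> (\<forall>a\<in>sh p U. \<not> ad zs a)"
    { assume a: "a \<in> I"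
      show "ad (ys @ zs) a"
      proof (cases "a < p")
        case True then show ?thesis using a H L by auto
      next
        case False
        then have "a > p" using split a by auto
        then have "a - p \<in> sh p I" unfolding sh_def using a by auto
        then show ?thesis using H R a \<open>a > p\<close> by auto
      qed }
    { assume a: "a \<in> U"
      show "\<not> ad (ys @ zs) a"
      proof (cases "a < p")
        case True then show ?thesis using a H L by auto
      next
        case False
        then have "a > p" using split a by auto
        then have "a - p \<in> sh p U" unfolding sh_def using a by auto
        then show ?thesis using H R a \<open>a > p\<close> by auto
      qed }
  qed
qed


lemma SS_split:
  assumes V: "finite V" and p: "1 \<le> p" "p < card V" "even p" "p \<in> J" "p \<notin> I" "p \<notin> U"
    and IU: "I \<union> U \<subseteq> {1..<card V}"
  shows "SS s I U J V = (\<Sum>A\<in>{A. A \<subseteq> V \<and> card A = p}.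
           SS s (I \<inter> {..<p}) (U \<inter> {..<p}) (J \<inter> {..<p}) A * SS (s + p) (sh p I) (sh p U) (sh p J) (V - A))"
proof -
  define G where "G = {A. A \<subseteq> V \<and> card A = p}"
  define TL where "TL = (\<lambda>A. {ys \<in> permutations_of_set A. cnd (I \<inter> {..<p}) (U \<inter> {..<p}) ys})"
  define TR where "TR = (\<lambda>A. {zs \<in> permutations_of_set (V - A). cnd (sh p I) (sh p U) zs})"
  define gL where "gL = (\<lambda>ys. qq ^ EE s (J \<inter> {..<p}) ys)"
  define gR where "gR = (\<lambda>zs. qq ^ EE (s + p) (sh p J) zs)"
  define T where "T = {xs \<in> permutations_of_set V. cnd I U xs}"
  have "G \<subseteq> Pow V" unfolding G_def by blast
  moreover have "finite (Pow V)" using V by simp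
  ultimately have finG: "finite G" by (rule finite_subset)
  have "(\<Sum>A\<in>G. SS s (I \<inter> {..<p}) (U \<inter> {..<p}) (J \<inter> {..<p}) A * SS (s + p) (sh p I) (sh p U) (sh p J) (V - A))
      = (\<Sum>A\<in>G. \<Sum>yz\<in>TL A \<times> TR A. gL (fst yz) * gR (snd yz))"
    unfolding SS_cnd TL_def TR_def gL_def gR_def
    by (simp add: sum_product sum.cartesian_product split_beta)
  also have "\<dots> = (\<Sum>b\<in>Sigma G (\<lambda>A. TL A \<times> TR A). gL (fst (snd b)) * gR (snd (snd b)))"
    by (subst sum.Sigma) (simp_all add: finG TL_def TR_def split_beta)
  finally have R: "(\<Sum>A\<in>G. SS s (I \<inter> {..<p}) (U \<inter> {..<p}) (J \<inter> {..<p}) A * SS (s + p) (sh p I) (sh p U) (sh p J) (V - A))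
      = (\<Sum>b\<in>Sigma G (\<lambda>A. TL A \<times> TR A). gL (fst (snd b)) * gR (snd (snd b)))" .
  have L: "SS s I U J V = (\<Sum>xs\<in>T. qq ^ EE s J xs)" unfolding SS_cnd T_def ..
  have f1: "(set (take p xs), take p xs, drop p xs) \<in> Sigma G (\<lambda>A. TL A \<times> TR A)" if xs: "xs \<in> T" for xs
  proof -
    from xs have d: "distinct xs" and sV: "set xs = V" and c: "cnd I U xs" and len: "length xs = card V"
      unfolding T_def permutations_of_set_def by (auto simp: distinct_card)
    have lt: "length (take p xs) = p" using len p by simp
    have cA: "card (set (take p xs)) = p" using lt d by (simp add: distinct_card)
    have dis: "set (take p xs) \<inter> set (drop p xs) = {}"
      using d by (simp add: set_take_disj_set_drop_if_distinct)
    have un: "set (take p xs) \<union> set (drop p xs) = V"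
      using sV by (metis append_take_drop_id set_append)
    have sd: "set (drop p xs) = V - set (take p xs)" using dis un by blast
    have "cnd I U (take p xs @ drop p xs)" using c by simp
    moreover have "I \<union> U \<subseteq> {1..<p + length (drop p xs)}" using IU len p by auto
    ultimately have cc: "cnd (I \<inter> {..<p}) (U \<inter> {..<p}) (take p xs) \<and> cnd (sh p I) (sh p U) (drop p xs)"
      using cnd_append[OF lt p(1) p(3) p(5) p(6)] by blast
    have "set (take p xs) \<in> G" unfolding G_def using cA un by auto
    moreover have "take p xs \<in> TL (set (take p xs))"
      unfolding TL_def permutations_of_set_def using cc d by simp
    moreover have "drop p xs \<in> TR (set (take p xs))"
      unfolding TR_def permutations_of_set_def using cc d sd by simp
    ultimately show ?thesis by simp
  qed
  have f2: "(set (take p (ys @ zs)), take p (ys @ zs), drop p (ys @ zs)) = (A, ys, zs)"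
    and f3: "ys @ zs \<in> T"
    if b: "(A, ys, zs) \<in> Sigma G (\<lambda>A. TL A \<times> TR A)" for A ys zs
  proof -
    from b have A: "A \<subseteq> V" "card A = p"
      and ys: "ys \<in> permutations_of_set A" and zs: "zs \<in> permutations_of_set (V - A)"
      and cy: "cnd (I \<inter> {..<p}) (U \<inter> {..<p}) ys" and cz: "cnd (sh p I) (sh p U) zs"
      unfolding G_def TL_def TR_def by auto
    have ly: "length ys = p" using ys A perms_len by blast
    moreover have "set ys = A" using ys unfolding permutations_of_set_def by simp
    ultimately show "(set (take p (ys @ zs)), take p (ys @ zs), drop p (ys @ zs)) = (A, ys, zs)" by simp
    have finA: "finite A" using A V finite_subset by blast
    have lz: "length zs = card V - p" using zs perms_len A V finA by (metis card_Diff_subset)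
    have "I \<union> U \<subseteq> {1..<p + length zs}" using IU lz p by auto
    then have "cnd I U (ys @ zs)" using cnd_append[OF ly p(1) p(3) p(5) p(6)] cy cz by blast
    moreover have "ys @ zs \<in> permutations_of_set V"
      using ys zs A unfolding permutations_of_set_def by auto
    ultimately show "ys @ zs \<in> T" unfolding T_def by simp
  qed
  have f4: "gL (take p xs) * gR (drop p xs) = qq ^ EE s J xs" if xs: "xs \<in> T" for xs
  proof -
    have len: "length xs = card V" using xs unfolding T_def using perms_len by blast
    have lt: "length (take p xs) = p" using len p by simp
    have "EE s J (take p xs @ drop p xs) = EE s (J \<inter> {..<p}) (take p xs) + EE (s + p) (sh p J) (drop p xs)"
      using EE_append[OF lt p(1) p(3) p(4)] .
    then show ?thesis unfolding gL_def gR_def by (simp add: power_add)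
  qed
  have main: "(\<Sum>xs\<in>T. qq ^ EE s J xs) = (\<Sum>b\<in>Sigma G (\<lambda>A. TL A \<times> TR A). gL (fst (snd b)) * gR (snd (snd b)))"
  proof (rule sum.reindex_bij_witness[where i="\<lambda>b. fst (snd b) @ snd (snd b)"
                                         and j="\<lambda>xs. (set (take p xs), take p xs, drop p xs)"])
    show "fst (snd (set (take p xs), take p xs, drop p xs)) @ snd (snd (set (take p xs), take p xs, drop p xs)) = xs" for xs
      by simp
    show "(set (take p xs), take p xs, drop p xs) \<in> Sigma G (\<lambda>A. TL A \<times> TR A)" if "xs \<in> T" for xs
      using f1[OF that] .
    show "(set (take p (fst (snd b) @ snd (snd b))), take p (fst (snd b) @ snd (snd b)), drop p (fst (snd b) @ snd (snd b))) = b"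
      if "b \<in> Sigma G (\<lambda>A. TL A \<times> TR A)" for b
    proof -
      obtain A ys zs where bd: "b = (A, ys, zs)" by (cases b) auto
      have "(A, ys, zs) \<in> Sigma G (\<lambda>A. TL A \<times> TR A)" using that bd by simp
      from f2[OF this] show ?thesis unfolding bd fst_conv snd_conv .
    qed
    show "fst (snd b) @ snd (snd b) \<in> T" if "b \<in> Sigma G (\<lambda>A. TL A \<times> TR A)" for b
    proof -
      obtain A ys zs where bd: "b = (A, ys, zs)" by (cases b) auto
      have "(A, ys, zs) \<in> Sigma G (\<lambda>A. TL A \<times> TR A)" using that bd by simp
      from f3[OF this] show ?thesis unfolding bd fst_conv snd_conv .
    qed
    show "gL (fst (snd (set (take p xs), take p xs, drop p xs))) * gR (snd (snd (set (take p xs), take p xs, drop p xs))) = qq ^ EE s J xs"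
      if "xs \<in> T" for xs
      using f4[OF that] by simp
  qed
  show ?thesis using L main R unfolding G_def by simp
qed


lemma EE_mod:
  assumes "d dvd s" "\<forall>a\<in>J. d dvd a"
  shows "EE s J xs mod d = EE 0 {} xs mod d"
proof -
  let ?f = "\<lambda>i. if i \<notin> J \<and> ad xs i then i + s else 0"
  let ?g = "\<lambda>i. if ad xs i then i else (0::nat)"
  have t: "?f i mod d = ?g i mod d" for i
  proof (cases "ad xs i")
    case True
    show ?thesis
    proof (cases "i \<in> J")
      case True
      then have "d dvd i" using assms by auto
      then show ?thesis using \<open>ad xs i\<close> True by simp
    next
      case False
      obtain k where "s = d * k" using assms(1) by (auto elim: dvdE)
      then show ?thesis using \<open>ad xs i\<close> False by simp
    qed
  qed simp
  have "EE s J xs mod d = (\<Sum>i=1..<length xs. ?f i mod d) mod d"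
    unfolding EE_def by (simp add: mod_sum_eq)
  also have "\<dots> = (\<Sum>i=1..<length xs. ?g i mod d) mod d" using t by simp
  also have "\<dots> = (\<Sum>i=1..<length xs. ?g i) mod d"
    by (simp add: mod_sum_eq)
  also have "(\<Sum>i=1..<length xs. ?g i) = EE 0 {} xs"
    unfolding EE_def by (intro sum.cong) auto
  finally show ?thesis .
qed

lemma SS_cong0:
  assumes "m \<ge> 1" "2*m dvd s" "\<forall>a\<in>J. 2*m dvd a"
  shows "(1 + qq ^ m) dvd SS s I U J V - SS 0 I U {} V"
  unfolding SS_def sum_subtractf[symmetric]
proof (rule dvd_sum)
  fix xs
  show "(1 + qq ^ m) dvd qq ^ EE s J xs - qq ^ EE 0 {} xs"
    using qq_cong[OF assms(1) EE_mod[OF assms(2,3)]] .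
qed

lemma ad_rev:
  assumes "distinct xs" "even (length xs)" "1 \<le> i" "i < length xs"
  shows "ad (rev xs) i \<longleftrightarrow> \<not> ad xs (length xs - i)"
proof -
  let ?n = "length xs"
  have r1: "rev xs ! (i - 1) = xs ! (?n - i)" using assms by (simp add: rev_nth Suc_diff_le)
  have r2: "rev xs ! i = xs ! (?n - Suc i)" using assms by (simp add: rev_nth)
  have i1: "?n - i - 1 = ?n - Suc i" by simp
  have par: "even (?n - i) = even i" using assms by simp
  have ne: "xs ! (?n - i) \<noteq> xs ! (?n - Suc i)"
    using assms by (simp add: nth_eq_iff_index_eq)
  show ?thesis unfolding ad_def r1 r2 i1 par using ne by auto
qed

definition Fb :: "nat \<Rightarrow> nat \<Rightarrow> nat set" where
  "Fb d r = {a. \<exists>t. 1 \<le> t \<and> t < r \<and> a = t * d}"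

lemma EE_rev:
  assumes "distinct xs" "length xs = n" "d dvd n" "even n"
  shows "(EE 0 {} (rev xs) + (\<Sum>i=1..<n. i)) mod d = EE 0 {} xs mod d"
proof -
  let ?D = "\<lambda>j. ad xs j"
  have "EE 0 {} (rev xs) = (\<Sum>i=1..<n. if \<not> ?D (n - i) then i else 0)"
    unfolding EE_def using assms by (intro sum.cong) (auto simp: ad_rev)
  also have "\<dots> = (\<Sum>j=1..<n. if \<not> ?D j then n - j else 0)"
    by (rule sum.reindex_bij_witness[where i="\<lambda>j. n - j" and j="\<lambda>i. n - i"]) auto
  finally have a: "EE 0 {} (rev xs) = (\<Sum>j=1..<n. if \<not> ?D j then n - j else 0)" .
  have b: "(\<Sum>j=1..<n. if \<not> ?D j then n - j else 0) + (\<Sum>j=1..<n. if \<not> ?D j then j else 0)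
         = (\<Sum>j=1..<n. if \<not> ?D j then n else 0)"
    by (subst sum.distrib[symmetric]) (intro sum.cong, auto)
  have c0: "EE 0 {} xs = (\<Sum>j=1..<n. if ?D j then j else 0)"
    unfolding EE_def using assms by (intro sum.cong) auto
  have c1: "(\<Sum>j=1..<n. if ?D j then j else 0) + (\<Sum>j=1..<n. if \<not> ?D j then j else 0) = (\<Sum>j=1..<n. j)"
    by (subst sum.distrib[symmetric]) (intro sum.cong, auto)
  have c: "EE 0 {} xs + (\<Sum>j=1..<n. if \<not> ?D j then j else 0) = (\<Sum>j=1..<n. j)"
    using c0 c1 by simp
  have dd: "d dvd (\<Sum>j=1..<n. if \<not> ?D j then n else (0::nat))"
    using assms by (intro dvd_sum) auto
  have "EE 0 {} (rev xs) + (\<Sum>i=1..<n. i) = (\<Sum>j=1..<n. if \<not> ?D j then n else 0) + EE 0 {} xs"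
    using a b c by linarith
  moreover obtain k where "(\<Sum>j=1..<n. if \<not> ?D j then n else (0::nat)) = d * k" using dd by (auto elim: dvdE)
  ultimately show ?thesis by simp
qed


lemma Fb_sym:
  assumes "n = d * r"
  shows "a \<in> Fb d r \<Longrightarrow> n - a \<in> Fb d r"
proof -
  assume "a \<in> Fb d r"
  then obtain t where t: "1 \<le> t" "t < r" "a = t * d" unfolding Fb_def by auto
  then have "n - a = (r - t) * d" using assms by (metis diff_mult_distrib mult.commute)
  then show "n - a \<in> Fb d r" unfolding Fb_def using t by (intro CollectI exI[of _ "r - t"]) auto
qed

lemma Fb_range: "d \<ge> 1 \<Longrightarrow> Fb d r \<subseteq> {1..<d * r}"
  unfolding Fb_def by (auto simp: mult.commute)

lemma cnd_rev:
  assumes "distinct xs" "length xs = n" "even n" "n = d * r" "d \<ge> 1"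
  shows "cnd (Fb d r) {} (rev xs) \<longleftrightarrow> cnd {} (Fb d r) xs"
proof -
  let ?F = "Fb d r"
  have rng: "a \<in> ?F \<Longrightarrow> 1 \<le> a \<and> a < n" for a
    using subsetD[OF Fb_range[OF assms(5), of r], of a] assms(4) by auto
  have "cnd ?F {} (rev xs) \<longleftrightarrow> (\<forall>a\<in>?F. \<not> ad xs (n - a))"
    unfolding cnd_def using assms rng ad_rev by auto
  also have "\<dots> \<longleftrightarrow> (\<forall>b\<in>?F. \<not> ad xs b)"
  proof
    assume H: "\<forall>a\<in>?F. \<not> ad xs (n - a)"
    show "\<forall>b\<in>?F. \<not> ad xs b"
    proof
      fix b assume b: "b \<in> ?F"
      then have "n - b \<in> ?F" using Fb_sym assms by blast
      then have "\<not> ad xs (n - (n - b))" using H by blast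
      moreover have "n - (n - b) = b" using rng[OF b] by simp
      ultimately show "\<not> ad xs b" by simp
    qed
  next
    assume H: "\<forall>b\<in>?F. \<not> ad xs b"
    show "\<forall>a\<in>?F. \<not> ad xs (n - a)" using H Fb_sym assms by blast
  qed
  finally show ?thesis unfolding cnd_def by simp
qed

lemma SS_rev:
  assumes m: "m \<ge> 1" and V: "finite V" "card V = 2 * m * r" and r: "r \<ge> 1"
  shows "(1 + qq ^ m) dvd SS 0 (Fb (2*m) r) {} {} V - (-1) ^ r * SS 0 {} (Fb (2*m) r) {} V"
proof -
  define n where "n = 2 * m * r"
  define F where "F = Fb (2*m) r"
  define Tin where "Tin = {xs \<in> permutations_of_set V. cnd F {} xs}"
  define Tout where "Tout = {xs \<in> permutations_of_set V. cnd {} F xs}"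
  have nd: "n = (2*m) * r" "even n" "2*m \<ge> 1" using m unfolding n_def by auto
  have pv: "xs \<in> permutations_of_set V \<Longrightarrow> distinct xs \<and> length xs = n" for xs
    using perms_len[of xs V] V unfolding n_def by (auto simp: permutations_of_set_def)
  have prv: "rev xs \<in> permutations_of_set V \<longleftrightarrow> xs \<in> permutations_of_set V" for xs
    unfolding permutations_of_set_def by auto
  have out_eq: "SS 0 {} F {} V = (\<Sum>xs\<in>Tin. qq ^ EE 0 {} (rev xs))"
    unfolding SS_cnd Tout_def[symmetric]
  proof (rule sum.reindex_bij_witness[where i=rev and j=rev])
    fix a assume "a \<in> Tout" then show "rev (rev a) = a" by simp
  next
    fix a assume a: "a \<in> Tout"
    then have "distinct a" "length a = n" using pv unfolding Tout_def by auto
    then have "cnd F {} (rev a)" using a cnd_rev[of a n "2*m" r] nd unfolding Tout_def F_def by auto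
    then show "rev a \<in> Tin" using a prv unfolding Tin_def Tout_def by auto
  next
    fix b assume "b \<in> Tin" then show "rev (rev b) = b" by simp
  next
    fix b assume b: "b \<in> Tin"
    then have "distinct (rev b)" "length (rev b) = n" using pv unfolding Tin_def by auto
    then have "cnd F {} (rev (rev b)) \<longleftrightarrow> cnd {} F (rev b)" using cnd_rev[of "rev b" n "2*m" r] nd unfolding F_def by auto
    then have "cnd {} F (rev b)" using b unfolding Tin_def by simp
    then show "rev b \<in> Tout" using b prv unfolding Tin_def Tout_def by auto
  next
    fix a assume "a \<in> Tout" then show "qq ^ EE 0 {} (rev (rev a)) = qq ^ EE 0 {} a" by simp
  qed
  have N: "(\<Sum>i=1..<n. i) = m * (r * (n - 1))"
  proof -
    have "(\<Sum>i=1..<n. i) = (n * (n - 1) - 1 * (1 - 1)) div 2" using Sum_Ico_nat[of 1 n] by simp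
    also have "\<dots> = m * (r * (n - 1))" unfolding n_def by simp
    finally show ?thesis .
  qed
  have sgn: "(-1 :: int poly) ^ (r * (n - 1)) = (-1) ^ r"
  proof -
    have "odd (n - 1)" using nd m r unfolding n_def by auto
    then have "(-1 :: int poly) ^ (n - 1) = -1" by simp
    have "(-1 :: int poly) ^ (r * (n - 1)) = ((-1) ^ (n - 1)) ^ r" by (metis power_mult mult.commute)
    then show ?thesis using \<open>(-1 :: int poly) ^ (n - 1) = -1\<close> by simp
  qed
  have pt: "(1 + qq ^ m) dvd qq ^ EE 0 {} xs - (-1) ^ r * qq ^ EE 0 {} (rev xs)" if xs: "xs \<in> Tin" for xs
  proof -
    have dl: "distinct xs" "length xs = n" using pv xs unfolding Tin_def by auto
    have e: "(EE 0 {} (rev xs) + (\<Sum>i=1..<n. i)) mod (2*m) = EE 0 {} xs mod (2*m)"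
      using EE_rev[OF dl(1) dl(2), of "2*m"] nd by simp
    have A: "(1 + qq ^ m) dvd qq ^ EE 0 {} xs - qq ^ (EE 0 {} (rev xs) + (\<Sum>i=1..<n. i))"
      using qq_cong[OF m e[symmetric]] .
    have "(1 + qq ^ m) dvd qq ^ (m * (r * (n - 1))) - (-1) ^ (r * (n - 1))" by (rule qq_m_pow)
    then have "(1 + qq ^ m) dvd qq ^ (\<Sum>i=1..<n. i) - (-1) ^ r" using N sgn by simp
    then have B: "(1 + qq ^ m) dvd qq ^ EE 0 {} (rev xs) * (qq ^ (\<Sum>i=1..<n. i) - (-1) ^ r)"
      by (rule dvd_mult)
    have eq: "qq ^ EE 0 {} xs - (-1) ^ r * qq ^ EE 0 {} (rev xs) =
          (qq ^ EE 0 {} xs - qq ^ (EE 0 {} (rev xs) + (\<Sum>i=1..<n. i))) + qq ^ EE 0 {} (rev xs) * (qq ^ (\<Sum>i=1..<n. i) - (-1) ^ r)"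
      by (simp add: power_add algebra_simps)
    show ?thesis unfolding eq by (rule dvd_add[OF A B])
  qed
  have "SS 0 F {} {} V - (-1) ^ r * SS 0 {} F {} V = (\<Sum>xs\<in>Tin. qq ^ EE 0 {} xs - (-1) ^ r * qq ^ EE 0 {} (rev xs))"
    unfolding out_eq unfolding SS_cnd Tin_def[symmetric]
    by (simp add: sum_subtractf sum_distrib_left)
  also have "(1 + qq ^ m) dvd \<dots>" using pt by (intro dvd_sum) auto
  finally show ?thesis unfolding F_def .
qed


lemma Fb_img: "Fb d r = (\<lambda>t. t * d) ` {1..<r}"
  unfolding Fb_def by auto

lemma Fb_finite: "finite (Fb d r)"
  unfolding Fb_img by simp

lemma Fb_card: "d \<ge> 1 \<Longrightarrow> card (Fb d r) = r - 1"
  unfolding Fb_img by (subst card_image) (auto simp: inj_on_def)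

lemma Fb_restrict:
  assumes "t \<le> r" "d \<ge> 1"
  shows "Fb d r \<inter> {..<t * d} = Fb d t"
  unfolding Fb_def using assms by auto

lemma Fb_Suc: "t \<ge> 1 \<Longrightarrow> Fb d (Suc t) = insert (t * d) (Fb d t)"
  unfolding Fb_def by (auto simp: less_Suc_eq)

lemma Fb_less: "d \<ge> 1 \<Longrightarrow> a \<in> Fb d r \<Longrightarrow> a < r * d"
  unfolding Fb_def by auto

lemma Fb_dvd: "a \<in> Fb d r \<Longrightarrow> d dvd a"
  unfolding Fb_def by auto

lemma sh_empty: "\<forall>a\<in>X. a \<le> p \<Longrightarrow> sh p X = {}"
  unfolding sh_def by auto

lemma LB:
  assumes m: "m \<ge> 1"
  shows "r \<ge> 1 \<Longrightarrow> finite V \<Longrightarrow> card V = 2 * m * r \<Longrightarrow> I \<union> U = Fb (2*m) r \<Longrightarrow> I \<inter> U = {}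
         \<Longrightarrow> (1 + qq ^ m) dvd SS 0 I U {} V"
proof (induction r arbitrary: V I U rule: less_induct)
  case (less r)
  define d where "d = 2 * m"
  define F where "F = Fb d r"
  define f where "f = 1 + qq ^ m"
  have d1: "d \<ge> 1" "even d" using m unfolding d_def by auto
  have V: "finite V" "card V = d * r" using less.prems unfolding d_def by auto
  have Frng: "F \<subseteq> {1..<card V}" using Fb_range[OF d1(1), of r] V unfolding F_def by simp
  have stepA: "f dvd SS 0 I' U' {} V + SS 0 (I' - {a}) (insert a U') {} V"
    if IU: "I' \<union> U' = F" "I' \<inter> U' = {}" and a: "a \<in> I'" for I' U' a
  proof -
    have aF: "a \<in> F" using IU a by auto
    then obtain t where t: "1 \<le> t" "t < r" "a = t * d" unfolding F_def Fb_def by auto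
    have "SS 0 (I' - {a}) U' {} V = SS 0 (insert a (I' - {a})) U' {} V + SS 0 (I' - {a}) (insert a U') {} V"
      by (rule SS_part)
    also have "insert a (I' - {a}) = I'" using a by auto
    finally have Z: "SS 0 I' U' {} V + SS 0 (I' - {a}) (insert a U') {} V = SS 0 (I' - {a}) U' {} V" by simp
    have c1: "f dvd SS 0 (I' - {a}) U' {a} V - SS 0 (I' - {a}) U' {} V"
      unfolding f_def using SS_cong0[OF m, of 0 "{a}"] t unfolding d_def by auto
    have a1: "1 \<le> a" "a < card V" "even a" using t d1 V Frng aF by auto
    have aU: "a \<notin> U'" using a IU by auto
    have rng: "(I' - {a}) \<union> U' \<subseteq> {1..<card V}" using IU Frng by auto
    have sp: "SS 0 (I' - {a}) U' {a} V = (\<Sum>A\<in>{A. A \<subseteq> V \<and> card A = a}.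
           SS 0 ((I' - {a}) \<inter> {..<a}) (U' \<inter> {..<a}) ({a} \<inter> {..<a}) A * SS (0 + a) (sh a (I' - {a})) (sh a U') (sh a {a}) (V - A))"
      by (rule SS_split[OF V(1) a1(1) a1(2) a1(3) _ _ aU rng]) auto
    have "f dvd SS 0 ((I' - {a}) \<inter> {..<a}) (U' \<inter> {..<a}) ({a} \<inter> {..<a}) A" if A: "A \<subseteq> V" "card A = a" for A
    proof -
      have "((I' - {a}) \<inter> {..<a}) \<union> (U' \<inter> {..<a}) = F \<inter> {..<t * d}" using IU t by auto
      also have "\<dots> = Fb d t" unfolding F_def using Fb_restrict[OF _ d1(1), of t r] t by simp
      finally have u: "((I' - {a}) \<inter> {..<a}) \<union> (U' \<inter> {..<a}) = Fb (2*m) t" unfolding d_def .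
      have "f dvd SS 0 ((I' - {a}) \<inter> {..<a}) (U' \<inter> {..<a}) {} A"
        unfolding f_def
        using less.IH[OF t(2) t(1) _ _ u] A V t IU finite_subset[OF A(1) V(1)] unfolding d_def
        by (auto simp: mult.commute)
      then show ?thesis by simp
    qed
    then have "f dvd SS 0 (I' - {a}) U' {a} V" unfolding sp by (intro dvd_sum dvd_mult2) auto
    from dvd_diff[OF this c1] have "f dvd SS 0 (I' - {a}) U' {} V" by simp
    then show ?thesis using Z by simp
  qed
  have finF: "finite F" unfolding F_def by (rule Fb_finite)
  define S0 where "S0 = SS 0 {} F {} V"
  have stepB: "f dvd SS 0 I' U' {} V - (-1) ^ card I' * S0"
    if "I' \<union> U' = F" "I' \<inter> U' = {}" for I' U'
    using that
  proof (induction "card I'" arbitrary: I' U')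
    case 0
    then have "I' \<subseteq> F" by auto
    then have "finite I'" using finF finite_subset by blast
    then have "I' = {}" using 0 by simp
    then have "U' = F" using 0 by simp
    then show ?case using \<open>I' = {}\<close> unfolding S0_def by simp
  next
    case (Suc k)
    then have "I' \<subseteq> F" by auto
    then have finI: "finite I'" using finF finite_subset by blast
    have "I' \<noteq> {}" using Suc(2) by auto
    then obtain a where a: "a \<in> I'" by blast
    have ck: "k = card (I' - {a})" using Suc(2) a finI by simp
    have e1: "(I' - {a}) \<union> insert a U' = F" using a Suc(3) by auto
    have e2: "(I' - {a}) \<inter> insert a U' = {}" using Suc(4) by auto
    have IH: "f dvd SS 0 (I' - {a}) (insert a U') {} V - (-1) ^ k * S0"
      using Suc(1)[OF ck e1 e2] ck by simp
    have A: "f dvd SS 0 I' U' {} V + SS 0 (I' - {a}) (insert a U') {} V"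
      using stepA[OF Suc(3,4) a] .
    have eqB: "SS 0 I' U' {} V - (-1) ^ card I' * S0 =
          (SS 0 I' U' {} V + SS 0 (I' - {a}) (insert a U') {} V) - (SS 0 (I' - {a}) (insert a U') {} V - (-1) ^ k * S0)"
      using Suc(2)[symmetric] by simp
    show ?case unfolding eqB by (rule dvd_diff[OF A IH])
  qed
  have r1: "r \<ge> 1" using less.prems by simp
  have R: "f dvd SS 0 F {} {} V - (-1) ^ r * S0"
    using SS_rev[OF m V(1), of r] V r1 unfolding f_def F_def S0_def d_def by (simp add: mult.commute)
  have B: "f dvd SS 0 F {} {} V - (-1) ^ (r - 1) * S0"
    using stepB[of F "{}"] Fb_card[OF d1(1), of r] unfolding F_def by simp
  have "f dvd (SS 0 F {} {} V - (-1) ^ (r - 1) * S0) - (SS 0 F {} {} V - (-1) ^ r * S0)"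
    using dvd_diff[OF B R] .
  moreover have "(-1 :: int poly) ^ r = - ((-1) ^ (r - 1))"
  proof -
    obtain r' where "r = Suc r'" using r1 by (cases r) auto
    then show ?thesis by simp
  qed
  ultimately have "f dvd 2 * ((-1) ^ r * S0)" by (simp add: algebra_simps)
  then have "f dvd (-1) ^ r * S0" unfolding f_def using dvd_two_cancel[OF m] by blast
  then have "f dvd (-1) ^ r * ((-1) ^ r * S0)" by (rule dvd_mult)
  then have S0d: "f dvd S0" by (simp flip: power_add mult.assoc add: mult_2[symmetric] power_mult)
  have "f dvd SS 0 I U {} V - (-1) ^ card I * S0" using stepB less.prems unfolding F_def d_def by simp
  from dvd_add[OF this dvd_mult[OF S0d, of "(-1) ^ card I"]] have "f dvd SS 0 I U {} V" by simp
  then show ?case unfolding f_def .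
qed


lemma LB':
  assumes m: "m \<ge> 1" and r: "r \<ge> 1" and V: "finite V" "card V = 2 * m * r" and s: "2 * m dvd s"
  shows "(1 + qq ^ m) dvd SS s (Fb (2*m) r) {} (Fb (2*m) r) V"
proof -
  have "(1 + qq ^ m) dvd SS 0 (Fb (2*m) r) {} {} V"
    using LB[OF m r V] by simp
  moreover have "(1 + qq ^ m) dvd SS s (Fb (2*m) r) {} (Fb (2*m) r) V - SS 0 (Fb (2*m) r) {} {} V"
    using SS_cong0[OF m s] Fb_dvd by blast
  ultimately show ?thesis using dvd_add by fastforce
qed

lemma Main:
  assumes m: "m \<ge> 1"
  shows "finite V \<Longrightarrow> card V = n \<Longrightarrow> 2 * m dvd s \<Longrightarrow> (1 + qq ^ m) ^ (n div (2 * m)) dvd SS s {} {} {} V"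
proof (induction n arbitrary: V s rule: less_induct)
  case (less n)
  define d where "d = 2 * m"
  define f where "f = 1 + qq ^ m"
  define K where "K = n div d"
  have d1: "d \<ge> 1" "even d" "d \<ge> 2" using m unfolding d_def by auto
  have V: "finite V" "card V = n" using less.prems by auto
  have s: "d dvd s" using less.prems unfolding d_def by simp
  show ?case
  proof (cases "K = 0")
    case True then show ?thesis unfolding K_def d_def by simp
  next
    case False
    have Kd: "K * d \<le> n" unfolding K_def using div_mult_mod_eq[of n d] by linarith
    have nK: "n div d = K" unfolding K_def ..
    have claim: "i < K \<Longrightarrow> f ^ (i + 1) dvd SS s (Fb d (K - i)) {} (Fb d (K - i)) V" for i
    proof (induction i)
      case 0
      show ?case
      proof (cases "K * d = n")
        case True
        have "f dvd SS s (Fb d K) {} (Fb d K) V"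
          using LB'[OF m, of K V s] False V True s unfolding f_def d_def by (simp add: mult.commute)
        then show ?thesis by simp
      next
        case Kn: False
        define p where "p = K * d"
        define G where "G = Fb d K"
        have p: "1 \<le> p" "p < card V" "even p" using False Kd Kn d1 V unfolding p_def by auto
        have pG: "p \<notin> G" unfolding G_def p_def using Fb_less[OF d1(1)] by blast
        have Grng: "G \<subseteq> {1..<card V}" using Fb_range[OF d1(1), of K] Kd V unfolding G_def
          by (auto simp: mult.commute)
        have ex: "SS s G {} G V = SS s G {} (insert p G) V + (qq ^ (p + s) - 1) * SS s (insert p G) {} (insert p G) V"
          by (rule SS_expand[OF V(1) p(1) p(2) pG])
        have sp: "SS s G {} (insert p G) V = (\<Sum>A\<in>{A. A \<subseteq> V \<and> card A = p}.
           SS s (G \<inter> {..<p}) ({} \<inter> {..<p}) (insert p G \<inter> {..<p}) A * SS (s + p) (sh p G) (sh p {}) (sh p (insert p G)) (V - A))"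
          by (rule SS_split[OF V(1) p(1) p(2) p(3) _ pG _ ]) (use Grng in auto)
        have Glt: "G \<inter> {..<p} = G" "insert p G \<inter> {..<p} = G"
          unfolding G_def p_def using Fb_less[OF d1(1)] by auto
        have "f dvd SS s G {} G A" if "A \<subseteq> V" "card A = p" for A
          using LB'[OF m, of K A s] False that V s finite_subset[OF that(1) V(1)] unfolding f_def d_def G_def p_def
          by (simp add: mult.commute)
        then have A: "f dvd SS s G {} (insert p G) V" unfolding sp Glt by (intro dvd_sum dvd_mult2) auto
        have "f dvd qq ^ (p + s) - qq ^ 0"
        proof -
        have "(p + s) mod (2 * m) = 0 mod (2 * m)" using s unfolding p_def d_def
          by (simp add: mod_add_left_eq[symmetric] dvd_imp_mod_0)
        then show ?thesis unfolding f_def by (rule qq_cong[OF m])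
      qed
        then have B: "f dvd (qq ^ (p + s) - 1) * SS s (insert p G) {} (insert p G) V" by simp
        show ?thesis using dvd_add[OF A B] ex unfolding G_def by simp
      qed
    next
      case (Suc i)
      define K' where "K' = K - Suc i"
      define p where "p = K' * d"
      define G where "G = Fb d K'"
      have K'1: "K' \<ge> 1" using Suc.prems unfolding K'_def by simp
      have KK: "K - i = Suc K'" using Suc.prems unfolding K'_def by simp
      have IH: "f ^ (i + 1) dvd SS s (insert p G) {} (insert p G) V"
        using Suc.IH Suc.prems KK Fb_Suc[OF K'1, of d] unfolding G_def p_def by simp
      have pn: "p < n"
      proof -
        have "K' < K" using Suc.prems unfolding K'_def by simp
        then have "K' * d < K * d" using d1 by simp
        then show ?thesis using Kd unfolding p_def by linarith
      qed
      have p: "1 \<le> p" "p < card V" "even p" using K'1 pn d1 V unfolding p_def by auto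
      have pG: "p \<notin> G" unfolding G_def p_def using Fb_less[OF d1(1)] by blast
      have Grng: "G \<subseteq> {1..<card V}" using Fb_range[OF d1(1), of K'] pn V unfolding G_def p_def
        by (auto simp: mult.commute)
      have ex: "SS s G {} G V = SS s G {} (insert p G) V + (qq ^ (p + s) - 1) * SS s (insert p G) {} (insert p G) V"
        by (rule SS_expand[OF V(1) p(1) p(2) pG])
      have sp: "SS s G {} (insert p G) V = (\<Sum>A\<in>{A. A \<subseteq> V \<and> card A = p}.
         SS s (G \<inter> {..<p}) ({} \<inter> {..<p}) (insert p G \<inter> {..<p}) A * SS (s + p) (sh p G) (sh p {}) (sh p (insert p G)) (V - A))"
        by (rule SS_split[OF V(1) p(1) p(2) p(3) _ pG _ ]) (use Grng in auto)
      have Glt: "G \<inter> {..<p} = G" "insert p G \<inter> {..<p} = G"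
        unfolding G_def p_def using Fb_less[OF d1(1)] by auto
      have Gsh: "sh p G = {}" "sh p (insert p G) = {}" "sh p {} = {}"
        unfolding G_def p_def using Fb_less[OF d1(1)] by (auto intro!: sh_empty simp: less_imp_le)
      have "f ^ (i + 2) dvd SS s G {} G A * SS (s + p) {} {} {} (V - A)" if A: "A \<subseteq> V" "card A = p" for A
      proof -
        have l: "f dvd SS s G {} G A"
          using LB'[OF m K'1, of A s] A V s finite_subset[OF A(1) V(1)] unfolding f_def d_def G_def p_def
          by (simp add: mult.commute)
        have cV: "card (V - A) = n - p" using A V by (simp add: card_Diff_subset finite_subset)
        have dv: "2 * m dvd s + p" using s unfolding p_def d_def by simp
        have "(n - p) div d = i + 1"
        proof -
          have pab: "p = K * d - (i + 1) * d" unfolding p_def K'_def by (simp add: diff_mult_distrib)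
          have "(i + 1) * d \<le> K * d" using Suc.prems by (intro mult_le_mono1) simp
          then have "n - p = (n - K * d) + (i + 1) * d" using Kd pab by linarith
          moreover have "n - K * d = n mod d" unfolding K_def using div_mult_mod_eq[of n d] by linarith
          moreover have "(n mod d) div d = 0" by simp
          ultimately have "n - p = n mod d + (i + 1) * d" "(n mod d) div d = 0" by simp_all
          moreover have "(n mod d + (i + 1) * d) div d = (i + 1) + (n mod d) div d"
            using d1 by (intro div_mult_self1) simp
          ultimately show ?thesis by simp
        qed
        then have r: "f ^ (i + 1) dvd SS (s + p) {} {} {} (V - A)"
        proof -
          have "n - p < n" using p pn by simp
          moreover have "finite (V - A)" using V(1) by simp
          ultimately show ?thesis using less.IH[OF _ _ cV dv] \<open>(n - p) div d = i + 1\<close> unfolding f_def d_def by simp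
        qed
        have "f * f ^ (i + 1) dvd SS s G {} G A * SS (s + p) {} {} {} (V - A)"
          using mult_dvd_mono[OF l r] .
        then show ?thesis by (simp add: power_add mult.commute)
      qed
      then have A: "f ^ (i + 2) dvd SS s G {} (insert p G) V" unfolding sp Glt Gsh by (intro dvd_sum) auto
      have "f dvd qq ^ (p + s) - qq ^ 0"
      proof -
        have "(p + s) mod (2 * m) = 0 mod (2 * m)" using s unfolding p_def d_def
          by (simp add: mod_add_left_eq[symmetric] dvd_imp_mod_0)
        then show ?thesis unfolding f_def by (rule qq_cong[OF m])
      qed
      then have "f dvd qq ^ (p + s) - 1" by simp
      then have "f * f ^ (i + 1) dvd (qq ^ (p + s) - 1) * SS s (insert p G) {} (insert p G) V"
        using mult_dvd_mono IH by blast
      then have B: "f ^ (i + 2) dvd (qq ^ (p + s) - 1) * SS s (insert p G) {} (insert p G) V"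
        by (simp add: power_add mult.commute)
      have "f ^ (Suc i + 1) dvd SS s G {} G V"
        using dvd_add[OF A B] ex by (simp add: power_add mult.commute)
      then show ?case unfolding G_def K'_def by (simp add: Suc_diff_Suc Suc.prems)
    qed
    have "f ^ (K - 1 + 1) dvd SS s (Fb d (K - (K - 1))) {} (Fb d (K - (K - 1))) V"
      using claim[of "K - 1"] False by simp
    moreover have "Fb d (K - (K - 1)) = {}" using False unfolding Fb_def by auto
    ultimately show ?thesis using False unfolding K_def f_def d_def by simp
  qed
qed


lemma altmaj_link: "altmaj_poly n = SS 0 {} {} {} {1..n}"
proof -
  define T where "T = {xs \<in> permutations_of_set {1..n}. (\<forall>a\<in>{}. ad xs a) \<and> (\<forall>a\<in>{}. \<not> ad xs a)}"
  define ii where "ii = (\<lambda>xs::nat list. \<lambda>k. if k \<in> {1..n} then xs ! (k - 1) else k)"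
  define jj where "jj = (\<lambda>p::nat \<Rightarrow> nat. map p [1..<n+1])"
  have Tm: "xs \<in> T \<longleftrightarrow> distinct xs \<and> set xs = {1..n}" for xs
    unfolding T_def permutations_of_set_def by auto
  have lenT: "xs \<in> T \<Longrightarrow> length xs = n" for xs
    using Tm distinct_card[of xs] by fastforce
  have jnth: "jj p ! (k - 1) = p k" if "k \<in> {1..n}" for p k
  proof -
    have "k - 1 < length [1..<n+1]" using that by auto
    then have "map p [1..<n+1] ! (k - 1) = p ([1..<n+1] ! (k - 1))" by (rule nth_map)
    also have "[1..<n+1] ! (k - 1) = k" using that by (subst nth_upt) auto
    finally show ?thesis unfolding jj_def .
  qed
  have "altmaj_poly n = (\<Sum>xs\<in>T. qq ^ EE 0 {} xs)"
    unfolding altmaj_poly_def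
  proof (rule sum.reindex_bij_witness[where i=ii and j=jj])
    fix p assume "p \<in> {p. p permutes {1..n}}"
    then have p: "p permutes {1..n}" by simp
    show "ii (jj p) = p"
    proof
      fix k show "ii (jj p) k = p k"
        using jnth[of k p] permutes_not_in[OF p, of k] unfolding ii_def by auto
    qed
    have su: "set [1..<n+1] = {1..n}" by (simp del: upt_Suc) auto
    have "distinct (jj p)" unfolding jj_def distinct_map su
      using permutes_inj_on[OF p] by (simp del: upt_Suc)
    moreover have "set (jj p) = {1..n}" unfolding jj_def set_map su
      using permutes_image[OF p] .
    ultimately show "jj p \<in> T" using Tm by simp
    have lj: "length (jj p) = n" unfolding jj_def by simp
    have adj: "ad (jj p) i \<longleftrightarrow> (even i \<and> p i < p (Suc i)) \<or> (odd i \<and> p i > p (Suc i))"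
      if "i \<in> {1..<n}" for i
    proof -
      have "jj p ! (i - 1) = p i" using jnth[of i p] that by simp
      moreover have "jj p ! i = p (Suc i)" using jnth[of "Suc i" p] that by simp
      ultimately show ?thesis unfolding ad_def by simp
    qed
    have "EE 0 {} (jj p) = (\<Sum>i\<in>{1..<n}. if ad (jj p) i then i else 0)"
      unfolding EE_def lj by (intro sum.cong) auto
    also have "\<dots> = (\<Sum>i\<in>{i\<in>{1..<n}. ad (jj p) i}. i)"
      by (rule sum.inter_filter[symmetric]) simp
    also have "{i\<in>{1..<n}. ad (jj p) i} = alt_des n p"
      unfolding alt_des_def using adj by auto
    finally have "EE 0 {} (jj p) = altmaj n p" unfolding altmaj_def .
    then show "qq ^ EE 0 {} (jj p) = monom 1 (altmaj n p)"
      by (simp add: monom_altdef qq_def)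
  next
    fix xs assume xs: "xs \<in> T"
    have l: "length xs = n" using lenT xs by simp
    show "jj (ii xs) = xs"
    proof (rule nth_equalityI)
      show "length (jj (ii xs)) = length xs" using l unfolding jj_def by (simp del: upt_Suc)
      fix k assume "k < length (jj (ii xs))"
      then have k: "k < n" unfolding jj_def by (simp del: upt_Suc)
      have "jj (ii xs) ! (Suc k - 1) = ii xs (Suc k)" using jnth[of "Suc k" "ii xs"] k by simp
      then show "jj (ii xs) ! k = xs ! k" using k unfolding ii_def by simp
    qed
    have d: "distinct xs" and sx: "set xs = {1..n}" using Tm xs by auto
    have inj: "inj_on (ii xs) {1..n}"
    proof (rule inj_onI)
      fix a b assume ab: "a \<in> {1..n}" "b \<in> {1..n}" "ii xs a = ii xs b"
      then have "xs ! (a - 1) = xs ! (b - 1)" unfolding ii_def by simp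
      moreover have "a - 1 < length xs" "b - 1 < length xs" using l ab by auto
      ultimately have "a - 1 = b - 1" using d nth_eq_iff_index_eq by blast
      moreover have "1 \<le> a" "1 \<le> b" using ab by auto
      ultimately show "a = b" by linarith
    qed
    have img: "ii xs ` {1..n} = {1..n}"
    proof -
      have "ii xs ` {1..n} = (\<lambda>k. xs ! (k - 1)) ` {1..n}" unfolding ii_def by auto
      also have "\<dots> = (\<lambda>j. xs ! j) ` {..<n}"
      proof
        show "(\<lambda>k. xs ! (k - 1)) ` {1..n} \<subseteq> (!) xs ` {..<n}" by auto
        show "(!) xs ` {..<n} \<subseteq> (\<lambda>k. xs ! (k - 1)) ` {1..n}"
        proof
          fix y assume "y \<in> (!) xs ` {..<n}"
          then obtain j where "j < n" "y = xs ! j" by auto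
          then show "y \<in> (\<lambda>k. xs ! (k - 1)) ` {1..n}" by (intro image_eqI[of _ _ "Suc j"]) auto
        qed
      qed
      also have "\<dots> = set xs" using l by (auto simp: set_conv_nth)
      finally show ?thesis using sx by simp
    qed
    have bb: "bij_betw (ii xs) {1..n} {1..n}" using inj img by (simp add: bij_betw_def)
    have out: "ii xs k = k" if "k \<notin> {1..n}" for k using that unfolding ii_def by (simp only: if_False)
    have "ii xs permutes {1..n}" using bij_imp_permutes[OF bb] out by blast
    then show "ii xs \<in> {p. p permutes {1..n}}" by simp
  qed
  also have "\<dots> = SS 0 {} {} {} {1..n}" unfolding SS_def T_def ..
  finally show ?thesis .
qed

theorem theorem4p3:
  fixes n m :: nat
  assumes "n \<ge> 1" and "m \<ge> 1"
  shows "(1 + monom (1::int) m) ^ (n div (2 * m)) dvd altmaj_poly n"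
proof -
  have "monom (1::int) m = qq ^ m" by (simp add: monom_altdef qq_def)
  moreover have "(1 + qq ^ m) ^ (n div (2 * m)) dvd SS 0 {} {} {} {1..n}"
    using Main[OF assms(2), of "{1..n}" n 0] by simp
  ultimately show ?thesis using altmaj_link by simp
qed

end
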